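(* Let $X$ be any real random variable, $a\neq 0$, $N\sim\mathcal N(0,1)$ independent of $X$, and $Y=aX+N$. For $y\in\mathbb R$ let $X_y$ have distribution $P_{X\mid Y=y}$. Then for every $y\in\mathbb{R}$, $X_y$ is sub-Gaussian; moreover for all $x>0$, $$\Pr(|X_y|\ge x)\le \sqrt{\tfrac{2}{\pi}}\,\frac{e^{y^2/2}}{h_0(y;a)}\,e^{-a^2x^2/4},$$ for every $n=1,2,\dots$, $$\mathbb{E}|X_y|^n\le \frac{n\,e^{y^2/2}}{h_0(y;a)}\Big(\frac{\sqrt2}{|a|}\Big)^n\sqrt{(n-1)!},$$ and $\mathbb{E}\big|X_y-\mathbb{E}X_y\big|^n\le 2^n\,\mathbb{E}|X_y|^n$.
   Context: $\varphi(t)=(2\pi)^{-1/2}e^{-t^2/2}$ is the standard Gaussian density, and $h_0(y;a)=\mathbb{E}[\varphi(y-aX)]$ (the density of $Y=aX+N$ at $y$, which is strictly positive). A random variable $W$ is sub-Gaussian if there exist $c,C>0$ with $\Pr(|W|>\lambda)\le Ce^{-c\lambda^2}$ for all $\lambda>0$. *)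

theory Defs
  imports "HOL-Probability.Probability"
begin

definition std_gauss :: "real \<Rightarrow> real" where
  "std_gauss t = exp (- (t^2) / 2) / sqrt (2 * pi)"

definition h0 :: "real measure \<Rightarrow> real \<Rightarrow> real \<Rightarrow> real" where
  "h0 PX a y = (\<integral>x. std_gauss (y - a * x) \<partial>PX)"

text \<open>The law P_{X|Y=y} of X_y for Y = aX + N, N ~ N(0,1) independent of X
  (canonical version given by Bayes' formula: density phi(y - a x)/h0(y;a) w.r.t. P_X).\<close>
definition cond_law :: "real measure \<Rightarrow> real \<Rightarrow> real \<Rightarrow> real measure" where
  "cond_law PX a y = density PX (\<lambda>x. ennreal (std_gauss (y - a * x) / h0 PX a y))"

definition sub_gaussian :: "real measure \<Rightarrow> bool" where
  "sub_gaussian M \<longleftrightarrow> (\<exists>c>0. \<exists>C>0. \<forall>r>0.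
      measure M {w \<in> space M. \<bar>w\<bar> > r} \<le> C * exp (- c * r^2))"

end

theory Submission
  imports Defs
begin


lemma exp_ge_pow_fact:
  fixes v :: real assumes "0 \<le> v"
  shows "v ^ n / fact n \<le> exp v"
proof -
  have s: "(\<lambda>k. v^k / fact k) sums exp v" using exp_converges[of v] by (simp add: divide_inverse mult.commute)
  have "(\<Sum>k\<in>{n}. v^k / fact k) \<le> (\<Sum>k. v^k / fact k)"
    by (rule sum_le_suminf) (use s assms in \<open>auto simp: sums_summable\<close>)
  then show ?thesis using s sums_unique by fastforce
qed

lemma tangent_pow:
  fixes u c :: real assumes "0 \<le> u" "0 \<le> c"
  shows "c ^ n + real n * c ^ (n - 1) * (u - c) \<le> u ^ n"
proof (cases "c = 0")
  case True
  then show ?thesis using assms by (cases n) (auto simp: power_0_left)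
next
  case False
  then have cp: "c > 0" using assms by auto
  have "1 + real n * (u / c - 1) \<le> (1 + (u/c - 1)) ^ n"
    by (rule Bernoulli_inequality) (use assms cp in auto)
  then have "c^n * (1 + real n * (u / c - 1)) \<le> c^n * (u/c) ^ n"
    using cp by (intro mult_left_mono) auto
  also have "c^n * (u/c)^n = u^n" using cp by (simp add: power_divide)
  also have "c^n * (1 + real n * (u / c - 1)) = c ^ n + real n * c ^ (n - 1) * (u - c)"
  proof (cases n)
    case 0 then show ?thesis by simp
  next
    case (Suc m)
    then show ?thesis using cp by (simp add: field_simps)
  qed
  finally show ?thesis .
qed

lemma gauss_bound:
  fixes a y t :: real
  shows "std_gauss (y - a * t) \<le> exp (y^2/2) / sqrt (2*pi) * exp (- (a^2 * t^2) / 4)"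
proof -
  have "0 \<le> (2*y - a*t)^2" by simp
  moreover have "(2*y - a*t)^2 = 4*y^2 - 4*(a*t*y) + a^2*t^2" by (simp add: power2_eq_square algebra_simps)
  moreover have "(y - a*t)^2 = y^2 - 2*(a*t*y) + a^2*t^2" by (simp add: power2_eq_square algebra_simps)
  ultimately have "- ((y - a*t)^2) / 2 \<le> y^2/2 + (- (a^2*t^2)/4)"
    by linarith
  then have "exp (- ((y - a*t)^2) / 2) \<le> exp (y^2/2) * exp (- (a^2*t^2)/4)"
    by (simp add: exp_add[symmetric])
  then show ?thesis unfolding std_gauss_def by (simp add: divide_right_mono)
qed

lemma poly_gauss_bound:
  fixes a t :: real assumes "a \<noteq> 0"
  shows "\<bar>t\<bar> ^ n * exp (- (a^2 * t^2) / 4) \<le> (sqrt 2 / \<bar>a\<bar>) ^ n * sqrt (fact n)"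
proof -
  define v where "v = a^2 * t^2 / 2"
  have v0: "0 \<le> v" unfolding v_def by simp
  have e: "v ^ n \<le> fact n * exp v" using exp_ge_pow_fact[OF v0, of n]
    by (simp add: field_simps)
  have "(\<bar>t\<bar> ^ n * exp (- (a^2 * t^2) / 4))^2 = (2 / a^2)^n * (v ^ n * exp (-v))"
    using assms unfolding v_def
    by (simp add: power_mult_distrib power_divide field_simps power2_eq_square[symmetric]
        exp_double[symmetric] power_even_abs flip: power_mult)
  also have "\<dots> \<le> (2 / a^2)^n * fact n"
  proof -
    have "v ^ n * exp (-v) \<le> fact n" using e by (simp add: exp_minus field_simps)
    then show ?thesis by (intro mult_left_mono) auto
  qed
  also have "\<dots> = ((sqrt 2 / \<bar>a\<bar>) ^ n * sqrt (fact n))^2"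
  proof -
    have p: "(sqrt 2 / \<bar>a\<bar>)^2 = 2/a^2" by (simp add: power_divide)
    have "((sqrt 2 / \<bar>a\<bar>) ^ n)^2 = ((sqrt 2 / \<bar>a\<bar>)^2) ^ n"
      by (metis power_mult mult.commute)
    then show ?thesis using p by (simp add: power_mult_distrib)
  qed
  finally show ?thesis
    by (rule power2_le_imp_le) auto
qed

lemma std_gauss_pos: "0 < std_gauss t" unfolding std_gauss_def by simp

lemma std_gauss_le1: "std_gauss t \<le> 1"
proof -
  have "exp (- (t^2) / 2) \<le> 1" by simp
  moreover have "1 \<le> sqrt (2 * pi)" using pi_gt3 by simp
  ultimately have "exp (- (t^2) / 2) \<le> sqrt (2 * pi)" by linarith
  then show ?thesis unfolding std_gauss_def by simp
qed

lemma sum_pow_le: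
  fixes u v :: real assumes "0 \<le> u" "0 \<le> v" "1 \<le> n"
  shows "(u + v) ^ n \<le> 2 ^ (n - 1) * (u ^ n + v ^ n)"
proof -
  define c where "c = (u + v) / 2"
  have c0: "0 \<le> c" using assms unfolding c_def by simp
  have "c ^ n + real n * c ^ (n - 1) * (u - c) \<le> u ^ n" by (rule tangent_pow) (use assms c0 in auto)
  moreover have "c ^ n + real n * c ^ (n - 1) * (v - c) \<le> v ^ n" by (rule tangent_pow) (use assms c0 in auto)
  moreover have "(u - c) + (v - c) = 0" unfolding c_def by simp
  moreover have "real n * c ^ (n - 1) * (u - c) + real n * c ^ (n - 1) * (v - c) = 0"
    by (metis \<open>(u - c) + (v - c) = 0\<close> distrib_left mult_zero_right)
  ultimately have "2 * c ^ n \<le> u ^ n + v ^ n"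
    by linarith
  moreover have "(u + v) ^ n = 2 ^ n * c ^ n" unfolding c_def by (simp add: power_divide)
  moreover have "(2::real) ^ n = 2 * 2 ^ (n - 1)" using assms(3)
    by (metis Suc_diff_le diff_Suc_1 power_Suc)
  ultimately have "(u + v) ^ n = 2 ^ (n - 1) * (2 * c ^ n)" by simp
  also have "\<dots> \<le> 2 ^ (n - 1) * (u ^ n + v ^ n)"
    by (rule mult_left_mono) (use \<open>2 * c ^ n \<le> u ^ n + v ^ n\<close> in auto)
  finally show ?thesis .
qed

lemma jensen_tangent:
  fixes m t :: real
  shows "\<bar>m\<bar> ^ n + real n * \<bar>m\<bar> ^ (n - 1) * (sgn m * (t - m)) \<le> \<bar>t\<bar> ^ n"
proof -
  have "sgn m * (t - m) \<le> \<bar>t\<bar> - \<bar>m\<bar>"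
    by (cases "m > 0"; cases "m = 0") (auto simp: sgn_if)
  then have "real n * \<bar>m\<bar> ^ (n - 1) * (sgn m * (t - m)) \<le> real n * \<bar>m\<bar> ^ (n - 1) * (\<bar>t\<bar> - \<bar>m\<bar>)"
    by (intro mult_left_mono) auto
  with tangent_pow[of "\<bar>t\<bar>" "\<bar>m\<bar>" n] show ?thesis by simp
qed



theorem proposition6:
  fixes PX :: "real measure" and a y :: real
  assumes "prob_space PX" and "sets PX = sets borel" and "a \<noteq> 0"
  defines "Xy \<equiv> cond_law PX a y"
  shows "sub_gaussian Xy \<and>
    (\<forall>x>0. measure Xy {t \<in> space Xy. \<bar>t\<bar> \<ge> x}
           \<le> sqrt (2 / pi) * exp (y^2 / 2) / h0 PX a y * exp (- (a^2 * x^2) / 4))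
    \<and> (\<forall>n\<ge>1. (\<integral>\<^sup>+ t. ennreal (\<bar>t\<bar> ^ n) \<partial>Xy)
           \<le> ennreal (real n * exp (y^2 / 2) / h0 PX a y * (sqrt 2 / \<bar>a\<bar>) ^ n * sqrt (fact (n - 1))))
    \<and> (\<forall>n\<ge>1. (\<integral>\<^sup>+ t. ennreal (\<bar>t - (\<integral>s. s \<partial>Xy)\<bar> ^ n) \<partial>Xy)
           \<le> 2 ^ n * (\<integral>\<^sup>+ t. ennreal (\<bar>t\<bar> ^ n) \<partial>Xy))"
proof -
  interpret P: prob_space PX by (rule assms(1))
  have spX: "space PX = UNIV" using sets_eq_imp_space_eq[OF assms(2)] by simp
  define h where "h = h0 PX a y"
  define f where "f = (\<lambda>x. std_gauss (y - a * x))"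
  have fmb: "f \<in> borel_measurable borel" unfolding f_def std_gauss_def by measurable
  have fm: "f \<in> borel_measurable PX" by (subst measurable_cong_sets[OF assms(2) refl]) (rule fmb)
  have fint: "integrable PX f"
    by (rule P.integrable_const_bound[where B=1]) (use fm std_gauss_le1 std_gauss_pos in \<open>auto simp: f_def less_imp_le\<close>)
  have hf: "h = (\<integral>x. f x \<partial>PX)" unfolding h_def h0_def f_def by simp
  have hpos: "h > 0"
  proof -
    have ge: "h \<ge> 0" unfolding hf by (rule integral_nonneg_AE) (auto simp: f_def std_gauss_pos less_imp_le)
    have "h \<noteq> 0"
    proof
      assume "h = 0"
      then have "AE x in PX. f x = 0" unfolding hf
        using integral_nonneg_eq_0_iff_AE[OF fint] by (auto simp: f_def std_gauss_pos less_imp_le)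
      then have "AE x in PX. False" by eventually_elim (use std_gauss_pos in \<open>auto simp: f_def\<close>; metis less_irrefl)
      then show False by simp
    qed
    with ge show ?thesis by simp
  qed
  define g where "g = (\<lambda>x. f x / h)"
  have gm: "g \<in> borel_measurable PX" unfolding g_def using fm by measurable
  have Xy: "Xy = density PX (\<lambda>x. ennreal (g x))"
    unfolding Xy_def cond_law_def g_def f_def h_def by simp
  have spY: "space Xy = UNIV" unfolding Xy using spX by simp
  have setsY: "sets Xy = sets borel" unfolding Xy using assms(2) by simp
  have nnY: "(\<integral>\<^sup>+ t. u t \<partial>Xy) = (\<integral>\<^sup>+ t. ennreal (g t) * u t \<partial>PX)" if "u \<in> borel_measurable borel" for u
    unfolding Xy by (rule nn_integral_density) (use gm that in \<open>auto simp: measurable_cong_sets[OF assms(2) refl]\<close>)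
  have probY: "prob_space Xy"
  proof
    have "emeasure Xy (space Xy) = (\<integral>\<^sup>+ t. ennreal (g t) * indicator (space PX) t \<partial>PX)"
      unfolding Xy by (subst emeasure_density) (use gm in auto)
    also have "\<dots> = (\<integral>\<^sup>+ t. ennreal (g t) \<partial>PX)"
      by (rule nn_integral_cong) auto
    also have "\<dots> = ennreal (\<integral>t. g t \<partial>PX)"
      by (rule nn_integral_eq_integral) (use fint hpos std_gauss_pos in \<open>auto simp: g_def f_def less_imp_le\<close>)
    also have "(\<integral>t. g t \<partial>PX) = 1" unfolding g_def using hpos hf by simp
    finally show "emeasure Xy (space Xy) = 1" by simp
  qed
  interpret Y: prob_space Xy by (rule probY)
  define C0 where "C0 = exp (y^2/2) / sqrt (2*pi) / h"
  have C0pos: "C0 > 0" unfolding C0_def using hpos by simp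
  have gle: "g t \<le> C0 * exp (- (a^2 * t^2) / 4)" for t
  proof -
    have "g t \<le> (exp (y^2/2) / sqrt (2*pi) * exp (- (a^2 * t^2) / 4)) / h"
      unfolding g_def f_def using hpos gauss_bound[of y a t] by (intro divide_right_mono) auto
    then show ?thesis unfolding C0_def by (simp add: field_simps)
  qed
  have g0: "0 \<le> g t" for t unfolding g_def f_def using hpos std_gauss_pos[of "y - a*t"] by simp
  have tail: "measure Xy A \<le> C0 * exp (- (a^2 * x^2) / 4)"
    if A: "A \<in> sets borel" "A \<subseteq> {t. \<bar>t\<bar> \<ge> x}" and x: "x \<ge> 0" for A x
  proof -
    define B where "B = C0 * exp (- (a^2 * x^2) / 4)"
    have B0: "B \<ge> 0" unfolding B_def using C0pos by simp
    have "emeasure Xy A = (\<integral>\<^sup>+ t. ennreal (g t) * indicator A t \<partial>PX)"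
      unfolding Xy by (rule emeasure_density) (use A assms(2) gm in simp_all)
    also have "\<dots> \<le> (\<integral>\<^sup>+ t. ennreal B \<partial>PX)"
    proof (rule nn_integral_mono)
      fix t assume "t \<in> space PX"
      show "ennreal (g t) * indicator A t \<le> ennreal B"
      proof (cases "t \<in> A")
        case True
        then have "x \<le> \<bar>t\<bar>" using A by auto
        then have "x^2 \<le> \<bar>t\<bar>^2" by (rule power_mono) (use x in auto)
        then have "x\<^sup>2 \<le> t\<^sup>2" by simp
        then have "a^2 * x^2 \<le> a^2 * t^2" by (intro mult_left_mono) auto
        then have "exp (- (a^2 * t^2) / 4) \<le> exp (- (a^2 * x^2) / 4)" by simp
        then have "C0 * exp (- (a^2 * t^2) / 4) \<le> C0 * exp (- (a^2 * x^2) / 4)"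
          using C0pos by (intro mult_left_mono) auto
        then have "g t \<le> B" unfolding B_def using gle[of t] by linarith
        then show ?thesis using True by (simp add: ennreal_leI)
      next
        case False then show ?thesis by simp
      qed
    qed
    also have "\<dots> = ennreal B" by (simp add: P.emeasure_space_1)
    finally have "emeasure Xy A \<le> ennreal B" .
    then have "measure Xy A \<le> B" unfolding measure_def by (rule enn2real_leI[OF B0])
    then show ?thesis unfolding B_def .
  qed
  define Pa where "Pa = sqrt 2 / \<bar>a\<bar>"
  have Pa0: "Pa \<ge> 0" unfolding Pa_def by simp
  have mom: "(\<integral>\<^sup>+ t. ennreal (\<bar>t\<bar> ^ n) \<partial>Xy) \<le> ennreal (C0 * Pa ^ n * sqrt (fact n))" for n
  proof -
    have "(\<integral>\<^sup>+ t. ennreal (\<bar>t\<bar> ^ n) \<partial>Xy) = (\<integral>\<^sup>+ t. ennreal (g t) * ennreal (\<bar>t\<bar> ^ n) \<partial>PX)"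
      by (rule nnY) measurable
    also have "\<dots> \<le> (\<integral>\<^sup>+ t. ennreal (C0 * Pa ^ n * sqrt (fact n)) \<partial>PX)"
    proof (rule nn_integral_mono)
      fix t
      have "g t * \<bar>t\<bar> ^ n \<le> C0 * exp (- (a^2 * t^2) / 4) * \<bar>t\<bar> ^ n"
        using gle[of t] by (simp add: mult_right_mono)
      also have "\<dots> = C0 * (\<bar>t\<bar> ^ n * exp (- (a^2 * t^2) / 4))" by simp
      also have "\<dots> \<le> C0 * (Pa ^ n * sqrt (fact n))"
        unfolding Pa_def using poly_gauss_bound[OF assms(3), of t n] C0pos by (simp add: mult_left_mono)
      finally show "ennreal (g t) * ennreal (\<bar>t\<bar> ^ n) \<le> ennreal (C0 * Pa ^ n * sqrt (fact n))"
        using g0[of t] by (simp add: ennreal_mult[symmetric] ennreal_leI mult.assoc)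
    qed
    also have "\<dots> = ennreal (C0 * Pa ^ n * sqrt (fact n))" by (simp add: P.emeasure_space_1)
    finally show ?thesis .
  qed
  have intpow: "integrable Xy (\<lambda>t. \<bar>t\<bar> ^ n)" for n
  proof (rule integrableI_bounded)
    show "(\<lambda>t. \<bar>t\<bar> ^ n) \<in> borel_measurable Xy" using setsY by (simp add: measurable_cong_sets[OF setsY refl])
    show "(\<integral>\<^sup>+ t. ennreal (norm (\<bar>t\<bar> ^ n)) \<partial>Xy) < \<infinity>"
      using mom[of n] by (simp add: le_less_trans[OF _ ennreal_less_top])
  qed
  have intid: "integrable Xy (\<lambda>t. t)"
  proof (rule integrableI_bounded)
    show "(\<lambda>t. t) \<in> borel_measurable Xy" by (simp add: measurable_cong_sets[OF setsY refl])
    show "(\<integral>\<^sup>+ t. ennreal (norm t) \<partial>Xy) < \<infinity>"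
      using mom[of 1] by (simp add: le_less_trans[OF _ ennreal_less_top])
  qed
  have E: "exp (y^2/2) / h > 0" using hpos by simp
  have c1: "1 / sqrt (2*pi) \<le> sqrt (2 / pi)"
  proof -
    have "1 / sqrt (2*pi) = sqrt (1 / (2*pi))" by (simp add: real_sqrt_divide)
    also have "\<dots> \<le> sqrt (2 / pi)" using pi_gt3 by (intro real_sqrt_le_mono) (simp add: field_simps)
    finally show ?thesis .
  qed
  have C0le: "C0 \<le> sqrt (2 / pi) * exp (y^2 / 2) / h"
  proof -
    have "C0 = (1 / sqrt (2*pi)) * (exp (y^2/2) / h)" unfolding C0_def by simp
    also have "\<dots> \<le> sqrt (2 / pi) * (exp (y^2/2) / h)" using c1 E by (intro mult_right_mono) auto
    finally show ?thesis by simp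
  qed
  have part1: "sub_gaussian Xy"
  proof -
    have b: "\<forall>r>0. measure Xy {w \<in> space Xy. \<bar>w\<bar> > r} \<le> C0 * exp (- (a^2/4) * r^2)"
    proof (intro allI impI)
      fix r :: real assume r: "r > 0"
      have "measure Xy {w \<in> space Xy. \<bar>w\<bar> > r} \<le> C0 * exp (- (a^2 * r^2) / 4)"
        by (rule tail) (use r in \<open>simp_all add: spY subset_eq\<close>)
      then show "measure Xy {w \<in> space Xy. \<bar>w\<bar> > r} \<le> C0 * exp (- (a^2/4) * r^2)"
        by simp
    qed
    have "0 < a^2/4" using assms(3) by simp
    then show ?thesis unfolding sub_gaussian_def using b C0pos by blast
  qed
  have part2: "\<forall>x>0. measure Xy {t \<in> space Xy. \<bar>t\<bar> \<ge> x}
           \<le> sqrt (2 / pi) * exp (y^2 / 2) / h0 PX a y * exp (- (a^2 * x^2) / 4)"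
  proof (intro allI impI)
    fix x :: real assume x: "x > 0"
    have "measure Xy {t \<in> space Xy. \<bar>t\<bar> \<ge> x} \<le> C0 * exp (- (a^2 * x^2) / 4)"
      by (rule tail) (use x in \<open>simp_all add: spY\<close>)
    also have "\<dots> \<le> sqrt (2 / pi) * exp (y^2 / 2) / h * exp (- (a^2 * x^2) / 4)"
      using C0le by (intro mult_right_mono) auto
    finally show "measure Xy {t \<in> space Xy. \<bar>t\<bar> \<ge> x}
           \<le> sqrt (2 / pi) * exp (y^2 / 2) / h0 PX a y * exp (- (a^2 * x^2) / 4)"
      unfolding h_def .
  qed
  have part3: "\<forall>n\<ge>1. (\<integral>\<^sup>+ t. ennreal (\<bar>t\<bar> ^ n) \<partial>Xy)
           \<le> ennreal (real n * exp (y^2 / 2) / h0 PX a y * (sqrt 2 / \<bar>a\<bar>) ^ n * sqrt (fact (n - 1)))"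
  proof (intro allI impI)
    fix n :: nat assume n: "n \<ge> 1"
    have f: "sqrt (fact n) \<le> real n * sqrt (fact (n - 1))"
    proof -
      have "fact n = real n * fact (n - 1)" using n by (simp add: fact_reduce)
      then have "sqrt (fact n) = sqrt (real n) * sqrt (fact (n - 1))" by (simp add: real_sqrt_mult)
      also have "\<dots> \<le> real n * sqrt (fact (n - 1))"
      proof (rule mult_right_mono)
        have "real n \<le> real n * real n" using mult_right_mono[of 1 "real n" "real n"] n by simp
        then have "sqrt (real n) \<le> sqrt (real n * real n)" by (rule real_sqrt_le_mono)
        then show "sqrt (real n) \<le> real n" by simp
      qed simp
      finally show ?thesis .
    qed
    have C0': "C0 \<le> exp (y^2/2) / h"
    proof -
      have "1 \<le> sqrt (2*pi)" using pi_gt3 by simp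
      then have "1 / sqrt (2*pi) \<le> 1" by simp
      then have "(1 / sqrt (2*pi)) * (exp (y^2/2) / h) \<le> 1 * (exp (y^2/2) / h)"
        using E by (intro mult_right_mono) auto
      then show ?thesis unfolding C0_def by simp
    qed
    have "C0 * Pa ^ n * sqrt (fact n) \<le> (exp (y^2/2) / h) * Pa ^ n * (real n * sqrt (fact (n - 1)))"
    proof -
      have "0 \<le> exp (y^2/2) / h * Pa ^ n" using E Pa0 by (intro mult_nonneg_nonneg) auto
      then show ?thesis using C0' f C0pos Pa0 by (intro mult_mono) auto
    qed
    also have "\<dots> = real n * exp (y^2 / 2) / h0 PX a y * (sqrt 2 / \<bar>a\<bar>) ^ n * sqrt (fact (n - 1))"
      unfolding h_def Pa_def by simp
    finally have le: "C0 * Pa ^ n * sqrt (fact n) \<le> real n * exp (y^2 / 2) / h0 PX a y * (sqrt 2 / \<bar>a\<bar>) ^ n * sqrt (fact (n - 1))" .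
    show "(\<integral>\<^sup>+ t. ennreal (\<bar>t\<bar> ^ n) \<partial>Xy)
           \<le> ennreal (real n * exp (y^2 / 2) / h0 PX a y * (sqrt 2 / \<bar>a\<bar>) ^ n * sqrt (fact (n - 1)))"
      using mom[of n] ennreal_leI[OF le] by (rule order_trans)
  qed
  have part4: "\<forall>n\<ge>1. (\<integral>\<^sup>+ t. ennreal (\<bar>t - (\<integral>s. s \<partial>Xy)\<bar> ^ n) \<partial>Xy)
           \<le> 2 ^ n * (\<integral>\<^sup>+ t. ennreal (\<bar>t\<bar> ^ n) \<partial>Xy)"
  proof (intro allI impI)
    fix n :: nat assume n: "n \<ge> 1"
    define m where "m = (\<integral>s. s \<partial>Xy)"
    define E where "E = (\<integral>t. \<bar>t\<bar> ^ n \<partial>Xy)"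
    have nnE: "(\<integral>\<^sup>+ t. ennreal (\<bar>t\<bar> ^ n) \<partial>Xy) = ennreal E"
      unfolding E_def by (rule nn_integral_eq_integral[OF intpow]) simp
    define k where "k = real n * \<bar>m\<bar> ^ (n - 1) * sgn m"
    have intaff: "integrable Xy (\<lambda>t. \<bar>m\<bar> ^ n + k * (t - m))"
      using intid by (intro Bochner_Integration.integrable_add Bochner_Integration.integrable_mult_right
          Bochner_Integration.integrable_diff) auto
    have "(\<integral>t. \<bar>m\<bar> ^ n + k * (t - m) \<partial>Xy) \<le> E"
      unfolding E_def
    proof (rule integral_mono[OF intaff intpow])
      fix t show "\<bar>m\<bar> ^ n + k * (t - m) \<le> \<bar>t\<bar> ^ n"
        using jensen_tangent[of m n t] unfolding k_def by (simp add: mult.assoc)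
    qed
    moreover have "(\<integral>t. \<bar>m\<bar> ^ n + k * (t - m) \<partial>Xy) = \<bar>m\<bar> ^ n"
    proof -
      have "(\<integral>t. \<bar>m\<bar> ^ n + k * (t - m) \<partial>Xy) = (\<integral>t. \<bar>m\<bar> ^ n \<partial>Xy) + (\<integral>t. k * (t - m) \<partial>Xy)"
        using intid by (intro Bochner_Integration.integral_add) auto
      also have "(\<integral>t. k * (t - m) \<partial>Xy) = k * (\<integral>t. t - m \<partial>Xy)" by simp
      also have "(\<integral>t. t - m \<partial>Xy) = (\<integral>t. t \<partial>Xy) - (\<integral>t. m \<partial>Xy)"
        using intid by (intro Bochner_Integration.integral_diff) auto
      also have "\<dots> = 0" unfolding m_def by (simp add: Y.prob_space)
      finally show ?thesis by (simp add: Y.prob_space)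
    qed
    ultimately have jen: "\<bar>m\<bar> ^ n \<le> E" by simp
    have pw: "\<bar>t - m\<bar> ^ n \<le> 2 ^ (n - 1) * (\<bar>t\<bar> ^ n + \<bar>m\<bar> ^ n)" for t
    proof -
      have "\<bar>t - m\<bar> ^ n \<le> (\<bar>t\<bar> + \<bar>m\<bar>) ^ n" by (rule power_mono) (auto simp: abs_triangle_ineq4)
      also have "\<dots> \<le> 2 ^ (n - 1) * (\<bar>t\<bar> ^ n + \<bar>m\<bar> ^ n)" by (rule sum_pow_le) (use n in auto)
      finally show ?thesis .
    qed
    have int2: "integrable Xy (\<lambda>t. 2 ^ (n - 1) * (\<bar>t\<bar> ^ n + \<bar>m\<bar> ^ n))"
      using intpow[of n] by (intro Bochner_Integration.integrable_mult_right Bochner_Integration.integrable_add) auto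
    have "(\<integral>\<^sup>+ t. ennreal (\<bar>t - m\<bar> ^ n) \<partial>Xy) \<le> (\<integral>\<^sup>+ t. ennreal (2 ^ (n - 1) * (\<bar>t\<bar> ^ n + \<bar>m\<bar> ^ n)) \<partial>Xy)"
      by (rule nn_integral_mono) (use pw in \<open>simp add: ennreal_leI\<close>)
    also have "\<dots> = ennreal (\<integral>t. 2 ^ (n - 1) * (\<bar>t\<bar> ^ n + \<bar>m\<bar> ^ n) \<partial>Xy)"
      by (rule nn_integral_eq_integral[OF int2]) simp
    also have "(\<integral>t. 2 ^ (n - 1) * (\<bar>t\<bar> ^ n + \<bar>m\<bar> ^ n) \<partial>Xy) = 2 ^ (n - 1) * (E + \<bar>m\<bar> ^ n)"
    proof -
      have "(\<integral>t. \<bar>t\<bar> ^ n + \<bar>m\<bar> ^ n \<partial>Xy) = E + \<bar>m\<bar> ^ n"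
        unfolding E_def using intpow[of n] by (subst Bochner_Integration.integral_add) (auto simp: Y.prob_space)
      then show ?thesis by simp
    qed
    also have "2 ^ (n - 1) * (E + \<bar>m\<bar> ^ n) \<le> 2 ^ n * E"
    proof -
      have "(2::real) ^ n = 2 * 2 ^ (n - 1)" using n by (simp add: power_eq_if)
      then show ?thesis using jen by simp
    qed
    also have "ennreal (2 ^ n * E) = 2 ^ n * ennreal E"
    proof -
      have E0: "0 \<le> E" unfolding E_def by (rule integral_nonneg_AE) simp
      have "ennreal (2 ^ n * E) = ennreal (2 ^ n) * ennreal E" using E0 by (simp add: ennreal_mult)
      then show ?thesis by (simp add: ennreal_power[symmetric])
    qed
    finally show "(\<integral>\<^sup>+ t. ennreal (\<bar>t - (\<integral>s. s \<partial>Xy)\<bar> ^ n) \<partial>Xy) \<le> 2 ^ n * (\<integral>\<^sup>+ t. ennreal (\<bar>t\<bar> ^ n) \<partial>Xy)"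
      unfolding m_def nnE by (simp add: ennreal_leI)
  qed
  show ?thesis using part1 part2 part3 part4 unfolding h_def by blast
qed
end
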